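(* Let $G$ be a connected threshold graph of order $n \ge 4$ and size $m$ with $n-1 < m < \binom{n}{2}$, with generating sequence $a_1a_2\cdots a_n$, $c$ type 1 vertices, $z$ type 0 vertices, backwards zero position sequence $(b_1,\ldots,b_z)$, and numbers $F_p$ ($p\in\mathbb{N}_0$) and $\mathrm{LW}_k$ ($k \in \mathbb{N}_0$) as defined in the context. Then the sequence $(\mathrm{LW}_k)_{k\in\mathbb{N}_0}$ satisfies \[ \mathrm{LW}_0 = 1, \qquad \mathrm{LW}_k = c\,\mathrm{LW}_{k-1} + \sum_{r=0}^{k-3} \mathrm{LW}_r \sum_{q\in\mathbb{N}_0} \binom{k-3-r-q}{q} F_{q+1} \qquad (k\in\mathbb{N}). \]
   Context: A threshold graph is a simple graph whose vertices can be ordered $v_1,\ldots,v_n$ so that for each $2\le i\le n$, $v_i$ is either adjacent to all of $v_1,\ldots,v_{i-1}$ (then $a_i=1$) or to none of them (then $a_i=0$); $a_1a_2\cdots a_n$ is the generating sequence, where by convention $a_1=1$. Vertex $v_i$ is of type 1 if $a_i=1$ and of type 0 if $a_i=0$; $c$ and $z$ denote the numbers of type 1 and type 0 vertices, so $c+z=n$ (here $c\ge 3$, $z \ge 1$). The backwards zero position sequence $(b_1,\ldots,b_z)$ is defined by letting $b_i$ be the number of type 1 vertices appearing after the $i$-th type 0 vertex in the order $v_1,\ldots,v_n$. A lazy walk of length $k\in\mathbb{N}_0$ is a sequence $u_0u_1\cdots u_k$ of vertices such that for each $1\le i\le k$, $u_i=u_{i-1}$ or $u_i$ is adjacent to $u_{i-1}$.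 For $k\in\mathbb{N}$, $\mathrm{LW}_k$ is the number of lazy walks of length $k-1$ in $G$ whose first and last vertices are both type 1 vertices, and $\mathrm{LW}_0=1$. Define $F_0=c$ and, for $p\ge 1$, \[F_p=\sum_{i_1,\ldots,i_p=1}^{z} b_{i_1}\min\{b_{i_1},b_{i_2}\}\min\{b_{i_2},b_{i_3}\}\cdots\min\{b_{i_{p-1}},b_{i_p}\}\,b_{i_p}\] (so $F_1=\sum_{i=1}^z b_i^2$). Binomial coefficients $\binom{a}{q}$ with integer $a$ and $q\in\mathbb{N}_0$ are taken to be $0$ whenever $a<q$. *)

theory Defs
  imports Main
begin

definition simple_graph :: "'a set \<Rightarrow> ('a \<Rightarrow> 'a \<Rightarrow> bool) \<Rightarrow> bool" where
  "simple_graph V E \<longleftrightarrow> finite V \<and>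
     (\<forall>x y. E x y \<longrightarrow> x \<in> V \<and> y \<in> V \<and> x \<noteq> y \<and> E y x)"

definition threshold_order ::
  "'a set \<Rightarrow> ('a \<Rightarrow> 'a \<Rightarrow> bool) \<Rightarrow> nat \<Rightarrow> (nat \<Rightarrow> 'a) \<Rightarrow> (nat \<Rightarrow> bool) \<Rightarrow> bool" where
  "threshold_order V E n v a \<longleftrightarrow> bij_betw v {1..n} V \<and> a 1 \<and>
     (\<forall>i\<in>{2..n}. \<forall>j\<in>{1..<i}. E (v i) (v j) = a i)"

definition graph_connected :: "'a set \<Rightarrow> ('a \<Rightarrow> 'a \<Rightarrow> bool) \<Rightarrow> bool" where
  "graph_connected V E \<longleftrightarrow> (\<forall>x\<in>V. \<forall>y\<in>V. E\<^sup>*\<^sup>* x y)"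

definition graph_size :: "('a \<Rightarrow> 'a \<Rightarrow> bool) \<Rightarrow> nat" where
  "graph_size E = card {{x, y} | x y. E x y}"

definition type1 :: "nat \<Rightarrow> (nat \<Rightarrow> 'a) \<Rightarrow> (nat \<Rightarrow> bool) \<Rightarrow> 'a \<Rightarrow> bool" where
  "type1 n v a u \<longleftrightarrow> (\<exists>i\<in>{1..n}. v i = u \<and> a i)"

definition num_type1 :: "nat \<Rightarrow> (nat \<Rightarrow> bool) \<Rightarrow> nat" where
  "num_type1 n a = card {i\<in>{1..n}. a i}"

definition num_type0 :: "nat \<Rightarrow> (nat \<Rightarrow> bool) \<Rightarrow> nat" where
  "num_type0 n a = card {i\<in>{1..n}. \<not> a i}"

text \<open>Positions of the type 0 vertices, in increasing order, and the backwards
zero position sequence (0-indexed list: entry i is b_(i+1)).\<close>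
definition zero_positions :: "nat \<Rightarrow> (nat \<Rightarrow> bool) \<Rightarrow> nat list" where
  "zero_positions n a = filter (\<lambda>i. \<not> a i) [1..<Suc n]"

definition bzps :: "nat \<Rightarrow> (nat \<Rightarrow> bool) \<Rightarrow> nat list" where
  "bzps n a = map (\<lambda>p. card {j. p < j \<and> j \<le> n \<and> a j}) (zero_positions n a)"

text \<open>F_0 = c, and for p >= 1 the sum over all index tuples (i_1,...,i_p) in
{1..z}^p (represented as lists over {0..<z}).\<close>
definition Fnum :: "nat \<Rightarrow> (nat \<Rightarrow> bool) \<Rightarrow> nat \<Rightarrow> nat" where
  "Fnum n a p = (if p = 0 then num_type1 n a else
     (let b = bzps n a; z = num_type0 n a in
      \<Sum>is\<in>{is. length is = p \<and> set is \<subseteq> {0..<z}}.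
         b ! (hd is) * (\<Prod>j<p - 1. min (b ! (is ! j)) (b ! (is ! Suc j))) * b ! (last is)))"

text \<open>Lazy walks u_0 ... u_(k-1) of length k-1 (k vertices) whose first and last vertices
are of type 1.\<close>
definition lazy_walks_11 ::
  "'a set \<Rightarrow> ('a \<Rightarrow> 'a \<Rightarrow> bool) \<Rightarrow> ('a \<Rightarrow> bool) \<Rightarrow> nat \<Rightarrow> 'a list set" where
  "lazy_walks_11 V E T k = {ws. length ws = k \<and> set ws \<subseteq> V \<and>
     (\<forall>i. Suc i < k \<longrightarrow> ws ! Suc i = ws ! i \<or> E (ws ! i) (ws ! Suc i)) \<and>
     T (hd ws) \<and> T (last ws)}"

definition LW :: "'a set \<Rightarrow> ('a \<Rightarrow> 'a \<Rightarrow> bool) \<Rightarrow> nat \<Rightarrow> (nat \<Rightarrow> 'a) \<Rightarrow> (nat \<Rightarrow> bool) \<Rightarrow> nat \<Rightarrow> nat" where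
  "LW V E n v a k = (if k = 0 then 1 else card (lazy_walks_11 V E (type1 n v a) k))"

end

theory Submission
  imports Defs
begin

primrec Hg :: "'b set \<Rightarrow> ('b \<Rightarrow> nat) \<Rightarrow> ('b \<Rightarrow> 'b \<Rightarrow> nat) \<Rightarrow> nat \<Rightarrow> 'b \<Rightarrow> nat" where
  "Hg A f K 0 x = f x"
| "Hg A f K (Suc q) x = (\<Sum>y\<in>A. K x y * Hg A f K q y)"

lemma lists_Suc_eq:
  "{l. length l = Suc p \<and> set l \<subseteq> A} = (\<lambda>(x,l). x # l) ` (A \<times> {l. length l = p \<and> set l \<subseteq> A})"
proof (rule set_eqI)
  fix l
  show "l \<in> {l. length l = Suc p \<and> set l \<subseteq> A} \<longleftrightarrow> l \<in> (\<lambda>(x,l). x # l) ` (A \<times> {l. length l = p \<and> set l \<subseteq> A})"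
    by (cases l) auto
qed

lemma list_sum_Hg:
  assumes "finite A"
  shows "(\<Sum>l\<in>{l. length l = Suc p \<and> set l \<subseteq> A}. u (hd l) * (\<Prod>j<p. K (l!j) (l!Suc j)) * f (last l))
     = (\<Sum>x\<in>A. u x * Hg A f K p x)"
  using assms
proof (induction p arbitrary: u)
  case 0
  have "{l. length l = Suc 0 \<and> set l \<subseteq> A} = (\<lambda>x. [x]) ` A"
    using lists_Suc_eq[of 0 A] by auto
  then show ?case by (simp add: sum.reindex inj_on_def)
next
  case (Suc p)
  let ?S = "{l. length l = Suc p \<and> set l \<subseteq> A}"
  have inj: "inj_on (\<lambda>(x,l). x # l) (A \<times> ?S)" by (auto simp: inj_on_def)
  have fin: "finite ?S" using finite_lists_length_eq[OF Suc.prems, of "Suc p"]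
    by (simp add: conj_commute)
  have "(\<Sum>l\<in>{l. length l = Suc (Suc p) \<and> set l \<subseteq> A}. u (hd l) * (\<Prod>j<Suc p. K (l!j) (l!Suc j)) * f (last l))
     = (\<Sum>(x,l)\<in>A \<times> ?S. u x * (\<Prod>j<Suc p. K ((x#l)!j) ((x#l)!Suc j)) * f (last (x#l)))"
    unfolding lists_Suc_eq[of "Suc p" A] by (subst sum.reindex[OF inj]) (simp add: case_prod_unfold)
  also have "\<dots> = (\<Sum>x\<in>A. \<Sum>l\<in>?S. (u x * K x (hd l)) * (\<Prod>j<p. K (l!j) (l!Suc j)) * f (last l))"
  proof -
    have eq: "\<And>x l. l \<in> ?S \<Longrightarrow> u x * (\<Prod>j<Suc p. K ((x#l)!j) ((x#l)!Suc j)) * f (last (x#l))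
          = (u x * K x (hd l)) * (\<Prod>j<p. K (l!j) (l!Suc j)) * f (last l)"
    proof -
      fix x l assume "l \<in> ?S"
      then have ne: "l \<noteq> []" by auto
      then have "(\<Prod>j<Suc p. K ((x#l)!j) ((x#l)!Suc j)) = K x (hd l) * (\<Prod>j<p. K (l!j) (l!Suc j))"
        by (subst prod.lessThan_Suc_shift) (simp add: hd_conv_nth del: prod.lessThan_Suc)
      then show "u x * (\<Prod>j<Suc p. K ((x#l)!j) ((x#l)!Suc j)) * f (last (x#l))
          = (u x * K x (hd l)) * (\<Prod>j<p. K (l!j) (l!Suc j)) * f (last l)"
        using ne by simp
    qed
    show ?thesis
      apply (simp only: sum.cartesian_product)
      apply (rule sum.cong[OF refl])
      apply (clarsimp simp only: eq split: prod.splits)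
      using eq by blast
  qed
  also have "\<dots> = (\<Sum>x\<in>A. \<Sum>y\<in>A. u x * K x y * Hg A f K p y)"
    by (rule sum.cong[OF refl], rule Suc.IH[OF Suc.prems])
  also have "\<dots> = (\<Sum>x\<in>A. u x * Hg A f K (Suc p) x)"
    by (simp add: sum_distrib_left mult.assoc)
  finally show ?case .
qed

lemma Hg_reindex:
  assumes "bij_betw h A B"
  shows "x \<in> A \<Longrightarrow> Hg A (\<lambda>x. f (h x)) (\<lambda>x y. K (h x) (h y)) q x = Hg B f K q (h x)"
proof (induction q arbitrary: x)
  case 0
  then show ?case by simp
next
  case (Suc q)
  have "Hg A (\<lambda>x. f (h x)) (\<lambda>x y. K (h x) (h y)) (Suc q) x = (\<Sum>y\<in>A. K (h x) (h y) * Hg B f K q (h y))"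
    using Suc.IH by simp
  also have "\<dots> = (\<Sum>y\<in>B. K (h x) y * Hg B f K q y)"
    using sum.reindex_bij_betw[OF assms, of "\<lambda>y. K (h x) y * Hg B f K q y"] by simp
  finally show ?case by simp
qed

lemma swap_card:
  assumes "finite A" "finite B"
  shows "(\<Sum>j\<in>A. \<Sum>p\<in>{p\<in>B. R p j}. f p) = (\<Sum>p\<in>B. card {j\<in>A. R p j} * (f p :: nat))"
proof -
  have "(\<Sum>j\<in>A. \<Sum>p\<in>{p\<in>B. R p j}. f p) = (\<Sum>p\<in>B. \<Sum>j\<in>{j\<in>A. R p j}. f p)"
    using sum.swap_restrict[OF assms, of "\<lambda>j p. f p" "\<lambda>j p. R p j"] by simp
  then show ?thesis by simp
qed

definition T1 :: "nat \<Rightarrow> (nat \<Rightarrow> bool) \<Rightarrow> nat set" where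
  "T1 n a = {j\<in>{1..n}. a j}"
definition P0 :: "nat \<Rightarrow> (nat \<Rightarrow> bool) \<Rightarrow> nat set" where
  "P0 n a = {j\<in>{1..n}. \<not> a j}"
definition bf :: "nat \<Rightarrow> (nat \<Rightarrow> bool) \<Rightarrow> nat \<Rightarrow> nat" where
  "bf n a p = card {j\<in>T1 n a. p < j}"
definition Lc :: "nat \<Rightarrow> (nat \<Rightarrow> bool) \<Rightarrow> (nat \<Rightarrow> nat \<Rightarrow> nat) \<Rightarrow> nat \<Rightarrow> nat" where
  "Lc n a cnt k = (if k = 0 then 1 else (\<Sum>j\<in>T1 n a. cnt k j))"
definition sc :: "(nat \<Rightarrow> nat \<Rightarrow> nat) \<Rightarrow> nat \<Rightarrow> nat \<Rightarrow> nat" where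
  "sc cnt k p = (if k = 0 then 0 else cnt k p)"
definition Mop :: "nat \<Rightarrow> (nat \<Rightarrow> bool) \<Rightarrow> (nat \<Rightarrow> nat) \<Rightarrow> nat \<Rightarrow> nat" where
  "Mop n a f p = (\<Sum>p'\<in>P0 n a. min (bf n a p) (bf n a p') * f p')"
definition HH :: "nat \<Rightarrow> (nat \<Rightarrow> bool) \<Rightarrow> nat \<Rightarrow> nat \<Rightarrow> nat" where
  "HH n a = Hg (P0 n a) (bf n a) (\<lambda>p p'. min (bf n a p) (bf n a p'))"
definition gg :: "nat \<Rightarrow> (nat \<Rightarrow> bool) \<Rightarrow> nat \<Rightarrow> nat \<Rightarrow> nat" where
  "gg n a m p = (\<Sum>q\<le>m. ((m - q) choose q) * HH n a q p)"

lemma fin_T1[simp]: "finite (T1 n a)" by (simp add: T1_def)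
lemma fin_P0[simp]: "finite (P0 n a)" by (simp add: P0_def)

lemma min_card: "card {j\<in>T1 n a. p < j \<and> p' < j} = min (bf n a p) (bf n a p')"
proof (cases "p \<le> p'")
  case True
  then have "{j\<in>T1 n a. p < j \<and> p' < j} = {j\<in>T1 n a. p' < j}" by auto
  moreover have "bf n a p' \<le> bf n a p" unfolding bf_def
    using True by (intro card_mono) auto
  ultimately show ?thesis by (simp add: bf_def min_def)
next
  case False
  then have "{j\<in>T1 n a. p < j \<and> p' < j} = {j\<in>T1 n a. p < j}" by auto
  moreover have "bf n a p \<le> bf n a p'" unfolding bf_def
    using False by (intro card_mono) auto
  ultimately show ?thesis by (simp add: bf_def min_def)
qed

lemma Mop_lin:
  "Mop n a (\<lambda>p'. \<Sum>r\<in>R. c r * f r p') p = (\<Sum>r\<in>R. c r * Mop n a (f r) p)"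
  unfolding Mop_def
  by (simp add: sum_distrib_left sum.swap[of _ R] mult.left_commute)

lemma HH_Suc: "HH n a (Suc q) p = Mop n a (HH n a q) p"
  by (simp add: HH_def Mop_def)

lemma gg_0: "gg n a 0 p = bf n a p" by (simp add: gg_def HH_def)
lemma gg_1: "gg n a (Suc 0) p = bf n a p" by (simp add: gg_def HH_def)

lemma gg_SS: "gg n a (Suc (Suc m)) p = gg n a (Suc m) p + Mop n a (gg n a m) p"
proof -
  let ?H = "HH n a"
  have M: "Mop n a (gg n a m) p = (\<Sum>q\<le>m. ((m - q) choose q) * ?H (Suc q) p)"
    unfolding gg_def by (simp add: Mop_lin HH_Suc)
  have L: "gg n a (Suc (Suc m)) p = ?H 0 p + (\<Sum>q\<le>Suc m. ((Suc m - q) choose Suc q) * ?H (Suc q) p)"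
    unfolding gg_def by (subst sum.atMost_Suc_shift) simp
  also have "\<dots> = ?H 0 p + (\<Sum>q\<le>m. ((Suc (m - q)) choose Suc q) * ?H (Suc q) p)"
    by (simp add: Suc_diff_le)
  also have "\<dots> = ?H 0 p + (\<Sum>q\<le>m. ((m - q) choose Suc q) * ?H (Suc q) p) + (\<Sum>q\<le>m. ((m - q) choose q) * ?H (Suc q) p)"
    by (simp add: sum.distrib algebra_simps)
  finally have 1: "gg n a (Suc (Suc m)) p = ?H 0 p + (\<Sum>q\<le>m. ((m - q) choose Suc q) * ?H (Suc q) p) + (\<Sum>q\<le>m. ((m - q) choose q) * ?H (Suc q) p)" .
  have 2: "gg n a (Suc m) p = ?H 0 p + (\<Sum>q\<le>m. ((m - q) choose Suc q) * ?H (Suc q) p)"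
    unfolding gg_def by (subst sum.atMost_Suc_shift) simp
  show ?thesis using 1 2 M by simp
qed

context
  fixes n :: nat and a :: "nat \<Rightarrow> bool" and cnt :: "nat \<Rightarrow> nat \<Rightarrow> nat"
  assumes h1: "\<And>j. j \<in> {1..n} \<Longrightarrow> cnt 1 j = (if a j then 1 else 0)"
    and h2: "\<And>m j. j \<in> {1..n} \<Longrightarrow> cnt (Suc (Suc m)) j = (\<Sum>i\<in>{i\<in>{1..n}. i = j \<or> a (max i j)}. cnt (Suc m) i)"
begin

lemma cntT:
  assumes "k \<ge> 1" "j \<in> T1 n a"
  shows "cnt k j = Lc n a cnt (k - 1) + (\<Sum>p\<in>{p\<in>P0 n a. p < j}. sc cnt (k - 1) p)"
proof (cases k)
  case 0 then show ?thesis using assms by simp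
next
  case (Suc k')
  show ?thesis
  proof (cases k')
    case 0
    then show ?thesis using Suc assms h1 by (simp add: T1_def Lc_def sc_def)
  next
    case (Suc m)
    have j: "j \<in> {1..n}" "a j" using assms by (auto simp: T1_def)
    have set: "{i\<in>{1..n}. i = j \<or> a (max i j)} = T1 n a \<union> {p\<in>P0 n a. p < j}"
      using j by (auto simp: T1_def P0_def max_def) (metis le_neq_implies_less)
    have disj: "T1 n a \<inter> {p\<in>P0 n a. p < j} = {}" by (auto simp: T1_def P0_def)
    have "cnt k j = (\<Sum>i\<in>T1 n a. cnt (Suc m) i) + (\<Sum>p\<in>{p\<in>P0 n a. p < j}. cnt (Suc m) p)"
      using h2[OF j(1), of m] \<open>k = Suc k'\<close> Suc set disj by (simp add: sum.union_disjoint)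
    then show ?thesis using \<open>k = Suc k'\<close> Suc by (simp add: Lc_def sc_def)
  qed
qed

lemma sc1: "p \<in> P0 n a \<Longrightarrow> sc cnt 1 p = 0"
  using h1 by (simp add: sc_def P0_def)

lemma scSS:
  assumes "p \<in> P0 n a"
  shows "sc cnt (Suc (Suc m)) p = sc cnt (Suc m) p + (\<Sum>j\<in>{j\<in>T1 n a. p < j}. cnt (Suc m) j)"
proof -
  have j: "p \<in> {1..n}" "\<not> a p" using assms by (auto simp: P0_def)
  have set: "{i\<in>{1..n}. i = p \<or> a (max i p)} = insert p {j\<in>T1 n a. p < j}"
    using j by (auto simp: T1_def max_def)
  have "p \<notin> {j\<in>T1 n a. p < j}" by auto
  then show ?thesis using h2[OF j(1), of m] set by (simp add: sc_def)
qed

lemma Lc_Suc: "Lc n a cnt (Suc k) = card (T1 n a) * Lc n a cnt k + (\<Sum>p\<in>P0 n a. bf n a p * sc cnt k p)"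
proof -
  have "Lc n a cnt (Suc k) = (\<Sum>j\<in>T1 n a. Lc n a cnt k + (\<Sum>p\<in>{p\<in>P0 n a. p < j}. sc cnt k p))"
    unfolding Lc_def[of n a cnt "Suc k"] using cntT[of "Suc k"] by simp
  also have "\<dots> = card (T1 n a) * Lc n a cnt k + (\<Sum>j\<in>T1 n a. \<Sum>p\<in>{p\<in>P0 n a. p < j}. sc cnt k p)"
    by (simp add: sum.distrib)
  also have "(\<Sum>j\<in>T1 n a. \<Sum>p\<in>{p\<in>P0 n a. p < j}. sc cnt k p) = (\<Sum>p\<in>P0 n a. bf n a p * sc cnt k p)"
    by (subst swap_card) (auto simp: bf_def)
  finally show ?thesis .
qed

lemma scSS2:
  assumes "p \<in> P0 n a"
  shows "sc cnt (Suc (Suc K)) p = sc cnt (Suc K) p + bf n a p * Lc n a cnt K + Mop n a (sc cnt K) p"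
proof -
  have "(\<Sum>j\<in>{j\<in>T1 n a. p < j}. cnt (Suc K) j)
     = (\<Sum>j\<in>{j\<in>T1 n a. p < j}. Lc n a cnt K + (\<Sum>p'\<in>{p'\<in>P0 n a. p' < j}. sc cnt K p'))"
    using cntT[of "Suc K"] by simp
  also have "\<dots> = bf n a p * Lc n a cnt K + (\<Sum>j\<in>{j\<in>T1 n a. p < j}. \<Sum>p'\<in>{p'\<in>P0 n a. p' < j}. sc cnt K p')"
    by (simp add: sum.distrib bf_def)
  also have "(\<Sum>j\<in>{j\<in>T1 n a. p < j}. \<Sum>p'\<in>{p'\<in>P0 n a. p' < j}. sc cnt K p') = Mop n a (sc cnt K) p"
    unfolding Mop_def
    by (subst swap_card) (auto simp: min_card[symmetric] conj_commute intro!: sum.cong arg_cong[where f=card])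
  finally show ?thesis using scSS[OF assms] by simp
qed

lemma sc_formula:
  "p \<in> P0 n a \<Longrightarrow> sc cnt k p = (\<Sum>r<k - 1. Lc n a cnt r * gg n a (k - 2 - r) p)"
proof (induction k arbitrary: p rule: less_induct)
  case (less k)
  show ?case
  proof (cases k)
    case 0 then show ?thesis by (simp add: sc_def)
  next
    case (Suc k')
    show ?thesis
    proof (cases k')
      case 0 then show ?thesis using Suc sc1[OF less.prems] by simp
    next
      case (Suc K)
      have IH1: "sc cnt (Suc K) p = (\<Sum>r<K. Lc n a cnt r * gg n a (K - 1 - r) p)"
        using less.IH[of "Suc K" p] less.prems \<open>k = Suc k'\<close> Suc by simp
      have IH0: "\<And>p'. p' \<in> P0 n a \<Longrightarrow> sc cnt K p' = (\<Sum>r<K - 1. Lc n a cnt r * gg n a (K - 2 - r) p')"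
        using less.IH[of K] \<open>k = Suc k'\<close> Suc by simp
      have M: "Mop n a (sc cnt K) p = (\<Sum>r<K - 1. Lc n a cnt r * Mop n a (gg n a (K - 2 - r)) p)"
      proof -
        have "Mop n a (sc cnt K) p = Mop n a (\<lambda>p'. \<Sum>r<K - 1. Lc n a cnt r * gg n a (K - 2 - r) p') p"
          unfolding Mop_def using IH0 by (intro sum.cong) auto
        then show ?thesis by (simp add: Mop_lin)
      qed
      have key: "(\<Sum>r<K. Lc n a cnt r * gg n a (K - r) p)
          = (\<Sum>r<K. Lc n a cnt r * gg n a (K - 1 - r) p) + (\<Sum>r<K - 1. Lc n a cnt r * Mop n a (gg n a (K - 2 - r)) p)"
      proof (cases K)
        case 0 then show ?thesis by simp
      next
        case (Suc K')
        have "(\<Sum>r<K'. Lc n a cnt r * gg n a (Suc K' - r) p)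
            = (\<Sum>r<K'. Lc n a cnt r * gg n a (K' - r) p) + (\<Sum>r<K'. Lc n a cnt r * Mop n a (gg n a (K' - 1 - r)) p)"
        proof -
          have "\<And>r. r < K' \<Longrightarrow> gg n a (Suc K' - r) p = gg n a (K' - r) p + Mop n a (gg n a (K' - 1 - r)) p"
          proof -
            fix r assume "r < K'"
            then have "Suc K' - r = Suc (Suc (K' - 1 - r))" "K' - r = Suc (K' - 1 - r)" by auto
            then show "gg n a (Suc K' - r) p = gg n a (K' - r) p + Mop n a (gg n a (K' - 1 - r)) p"
              using gg_SS by simp
          qed
          then show ?thesis by (simp add: sum.distrib[symmetric] algebra_simps)
        qed
        then show ?thesis using Suc by (simp add: gg_0 gg_1)
      qed
      have "sc cnt k p = sc cnt (Suc K) p + bf n a p * Lc n a cnt K + Mop n a (sc cnt K) p"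
        using scSS2[OF less.prems, of K] \<open>k = Suc k'\<close> Suc by simp
      also have "\<dots> = (\<Sum>r<Suc K. Lc n a cnt r * gg n a (K - r) p)"
        using IH1 M key by (simp add: gg_0)
      finally show ?thesis using \<open>k = Suc k'\<close> Suc by simp
    qed
  qed
qed

lemma Lc_final:
  "Lc n a cnt (Suc K) = card (T1 n a) * Lc n a cnt K +
     (\<Sum>r<K - 1. Lc n a cnt r * (\<Sum>q\<le>K - 2 - r. ((K - 2 - r - q) choose q) * (\<Sum>p\<in>P0 n a. bf n a p * HH n a q p)))"
proof -
  have "(\<Sum>p\<in>P0 n a. bf n a p * sc cnt K p) = (\<Sum>p\<in>P0 n a. bf n a p * (\<Sum>r<K - 1. Lc n a cnt r * gg n a (K - 2 - r) p))"
    using sc_formula by (intro sum.cong) auto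
  also have "\<dots> = (\<Sum>r<K - 1. Lc n a cnt r * (\<Sum>p\<in>P0 n a. bf n a p * gg n a (K - 2 - r) p))"
    by (simp add: sum_distrib_left sum.swap[of _ "P0 n a"] mult.left_commute)
  also have "\<dots> = (\<Sum>r<K - 1. Lc n a cnt r * (\<Sum>q\<le>K - 2 - r. ((K - 2 - r - q) choose q) * (\<Sum>p\<in>P0 n a. bf n a p * HH n a q p)))"
    unfolding gg_def by (simp add: sum_distrib_left sum.swap[of _ "P0 n a"] mult.left_commute)
  finally show ?thesis using Lc_Suc by simp
qed

end


definition wk :: "'a set \<Rightarrow> ('a \<Rightarrow> 'a \<Rightarrow> bool) \<Rightarrow> ('a \<Rightarrow> bool) \<Rightarrow> nat \<Rightarrow> 'a \<Rightarrow> 'a list set" where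
  "wk V E T k y = {ws. length ws = k \<and> set ws \<subseteq> V \<and>
     (\<forall>i. Suc i < k \<longrightarrow> ws ! Suc i = ws ! i \<or> E (ws ! i) (ws ! Suc i)) \<and> T (hd ws) \<and> last ws = y}"

lemma wk_fin: "finite V \<Longrightarrow> finite (wk V E T k y)"
  by (rule finite_subset[OF _ finite_lists_length_eq[of V k]]) (auto simp: wk_def)

lemma lw_union: "k \<ge> 1 \<Longrightarrow> lazy_walks_11 V E T k = (\<Union>y\<in>{y\<in>V. T y}. wk V E T k y)"
  unfolding lazy_walks_11_def wk_def
proof (rule set_eqI, rule iffI)
  fix ws assume "k \<ge> 1" and ws: "ws \<in> {ws. length ws = k \<and> set ws \<subseteq> V \<and>
     (\<forall>i. Suc i < k \<longrightarrow> ws ! Suc i = ws ! i \<or> E (ws ! i) (ws ! Suc i)) \<and> T (hd ws) \<and> T (last ws)}"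
  then have "ws \<noteq> []" by auto
  then have "last ws \<in> V" using ws by auto
  then show "ws \<in> (\<Union>y\<in>{y\<in>V. T y}. {ws. length ws = k \<and> set ws \<subseteq> V \<and>
     (\<forall>i. Suc i < k \<longrightarrow> ws ! Suc i = ws ! i \<or> E (ws ! i) (ws ! Suc i)) \<and> T (hd ws) \<and> last ws = y})"
    using ws by auto
qed auto

lemma card_lw:
  assumes "finite V" "k \<ge> 1"
  shows "card (lazy_walks_11 V E T k) = (\<Sum>y\<in>{y\<in>V. T y}. card (wk V E T k y))"
  unfolding lw_union[OF assms(2)]
  apply (rule card_UN_disjoint)
  using assms(1) apply simp
  using wk_fin[OF assms(1)] apply blast
  apply (auto simp: wk_def)
  done

lemma wk1: "wk V E T (Suc 0) y = (if y \<in> V \<and> T y then {[y]} else {})"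
  by (auto simp: wk_def length_Suc_conv)

lemma wkSS:
  assumes "y \<in> V"
  shows "wk V E T (Suc (Suc m)) y = (\<lambda>ws. ws @ [y]) ` (\<Union>x\<in>{x\<in>V. x = y \<or> E x y}. wk V E T (Suc m) x)"
proof (rule set_eqI, rule iffI)
  fix ws' assume w: "ws' \<in> wk V E T (Suc (Suc m)) y"
  let ?ws = "butlast ws'"
  have len: "length ws' = Suc (Suc m)" using w by (simp add: wk_def)
  then have ne: "ws' \<noteq> []" by auto
  have eq: "ws' = ?ws @ [y]" using w ne by (simp add: wk_def) (metis append_butlast_last_id)
  have lb: "length ?ws = Suc m" using len by simp
  have nth: "\<And>i. i < Suc m \<Longrightarrow> ?ws ! i = ws' ! i" using lb by (simp add: nth_butlast)
  have x: "last ?ws = ws' ! m" using lb nth[of m] by (subst last_conv_nth) (auto simp del: length_butlast)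
  have lastrel: "ws' ! Suc m = ws' ! m \<or> E (ws' ! m) (ws' ! Suc m)" using w len by (simp add: wk_def)
  have ysm: "ws' ! Suc m = y" using eq lb by (metis nth_append_length)
  have setb: "set ?ws \<subseteq> V" using w by (auto simp: wk_def dest: in_set_butlastD)
  have "hd ?ws = hd ws'" using lb eq by (metis Zero_not_Suc hd_append list.size(3))
  then have "?ws \<in> wk V E T (Suc m) (last ?ws)"
    using w lb setb nth by (auto simp: wk_def)
  moreover have "last ?ws \<in> V" using setb lb
    by (metis Zero_not_Suc last_in_set list.size(3) subsetD)
  moreover have "last ?ws = y \<or> E (last ?ws) y" using lastrel x ysm by auto
  ultimately show "ws' \<in> (\<lambda>ws. ws @ [y]) ` (\<Union>x\<in>{x\<in>V. x = y \<or> E x y}. wk V E T (Suc m) x)"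
    using eq by blast
next
  fix ws' assume "ws' \<in> (\<lambda>ws. ws @ [y]) ` (\<Union>x\<in>{x\<in>V. x = y \<or> E x y}. wk V E T (Suc m) x)"
  then obtain ws x where ws': "ws' = ws @ [y]" and xV: "x \<in> V" and xy: "x = y \<or> E x y"
    and ws: "ws \<in> wk V E T (Suc m) x" by blast
  have len: "length ws = Suc m" and set: "set ws \<subseteq> V" and hd: "T (hd ws)" and last: "last ws = x"
    and ch: "\<And>i. Suc i < Suc m \<Longrightarrow> ws ! Suc i = ws ! i \<or> E (ws ! i) (ws ! Suc i)"
    using ws by (auto simp: wk_def)
  have lm: "ws ! m = x" using len last by (metis Zero_not_Suc diff_Suc_1 last_conv_nth list.size(3))
  have "\<forall>i. Suc i < Suc (Suc m) \<longrightarrow> ws' ! Suc i = ws' ! i \<or> E (ws' ! i) (ws' ! Suc i)"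
  proof (intro allI impI)
    fix i assume i: "Suc i < Suc (Suc m)"
    show "ws' ! Suc i = ws' ! i \<or> E (ws' ! i) (ws' ! Suc i)"
    proof (cases "i = m")
      case True
      then show ?thesis using ws' len lm xy by (auto simp: nth_append)
    next
      case False
      then have "Suc i < Suc m" using i by simp
      then show ?thesis using ch[of i] ws' len by (simp add: nth_append)
    qed
  qed
  moreover have "hd ws' = hd ws" using ws' len by (cases ws) auto
  ultimately show "ws' \<in> wk V E T (Suc (Suc m)) y"
    using ws' len set hd assms by (simp add: wk_def)
qed

lemma card_wkSS:
  assumes "finite V" "y \<in> V"
  shows "card (wk V E T (Suc (Suc m)) y) = (\<Sum>x\<in>{x\<in>V. x = y \<or> E x y}. card (wk V E T (Suc m) x))"
proof -
  have "card (wk V E T (Suc (Suc m)) y) = card (\<Union>x\<in>{x\<in>V. x = y \<or> E x y}. wk V E T (Suc m) x)"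
    unfolding wkSS[OF assms(2)] by (rule card_image) (auto simp: inj_on_def)
  also have "\<dots> = (\<Sum>x\<in>{x\<in>V. x = y \<or> E x y}. card (wk V E T (Suc m) x))"
    apply (rule card_UN_disjoint)
    using assms(1) apply simp
    using wk_fin[OF assms(1)] apply blast
    apply (auto simp: wk_def)
    done
  finally show ?thesis .
qed


lemma Fnum_eq: "Fnum n a (Suc q) = (\<Sum>p\<in>P0 n a. bf n a p * HH n a q p)"
proof -
  define zp where "zp = zero_positions n a"
  define z where "z = num_type0 n a"
  define b where "b = bzps n a"
  have dzp: "distinct zp" by (simp add: zp_def zero_positions_def)
  have szp: "set zp = P0 n a" by (auto simp: zp_def zero_positions_def P0_def)
  have lz: "length zp = z"
    using distinct_card[OF dzp] szp by (simp add: z_def num_type0_def P0_def)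
  have bij: "bij_betw ((!) zp) {0..<z} (P0 n a)"
    by (rule bij_betw_nth[OF dzp]) (auto simp: lz szp)
  have bfeq: "\<And>p. card {j. p < j \<and> j \<le> n \<and> a j} = bf n a p"
    unfolding bf_def T1_def by (rule arg_cong[where f=card]) auto
  have bi: "\<And>i. i < z \<Longrightarrow> b ! i = bf n a (zp ! i)"
    using lz by (simp add: b_def bzps_def zp_def[symmetric] bfeq)
  let ?f = "\<lambda>i. bf n a (zp ! i)"
  let ?K = "\<lambda>i j. min (bf n a (zp ! i)) (bf n a (zp ! j))"
  have "Fnum n a (Suc q) = (\<Sum>xs\<in>{xs. length xs = Suc q \<and> set xs \<subseteq> {0..<z}}.
         b ! (hd xs) * (\<Prod>j<q. min (b ! (xs ! j)) (b ! (xs ! Suc j))) * b ! (last xs))"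
    by (simp add: Fnum_def b_def z_def Let_def)
  also have "\<dots> = (\<Sum>xs\<in>{xs. length xs = Suc q \<and> set xs \<subseteq> {0..<z}}.
         ?f (hd xs) * (\<Prod>j<q. ?K (xs ! j) (xs ! Suc j)) * ?f (last xs))"
  proof (rule sum.cong[OF refl])
    fix xs assume "xs \<in> {xs. length xs = Suc q \<and> set xs \<subseteq> {0..<z}}"
    then have l: "length xs = Suc q" and st: "set xs \<subseteq> {0..<z}" by auto
    have ne: "xs \<noteq> []" using l by auto
    have "hd xs < z" using st ne hd_in_set by fastforce
    moreover have "last xs < z" using st ne last_in_set by fastforce
    moreover have "\<And>j. j < q \<Longrightarrow> xs ! j < z \<and> xs ! Suc j < z"
      using st l nth_mem by (metis atLeastLessThan_iff less_SucI not_less_eq subsetD)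
    ultimately show "b ! (hd xs) * (\<Prod>j<q. min (b ! (xs ! j)) (b ! (xs ! Suc j))) * b ! (last xs) =
         ?f (hd xs) * (\<Prod>j<q. ?K (xs ! j) (xs ! Suc j)) * ?f (last xs)"
      by (simp add: bi)
  qed
  also have "\<dots> = (\<Sum>i\<in>{0..<z}. ?f i * Hg {0..<z} ?f ?K q i)"
    by (rule list_sum_Hg) simp
  also have "\<dots> = (\<Sum>i\<in>{0..<z}. ?f i * HH n a q (zp ! i))"
    unfolding HH_def using Hg_reindex[OF bij, of _ "bf n a" "\<lambda>p p'. min (bf n a p) (bf n a p')" q]
    by (intro sum.cong) auto
  also have "\<dots> = (\<Sum>p\<in>P0 n a. bf n a p * HH n a q p)"
    using sum.reindex_bij_betw[OF bij, of "\<lambda>p. bf n a p * HH n a q p"] by simp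
  finally show ?thesis .
qed

theorem proposition3p5:
  fixes V :: "'a set" and E :: "'a \<Rightarrow> 'a \<Rightarrow> bool" and n :: nat
    and v :: "nat \<Rightarrow> 'a" and a :: "nat \<Rightarrow> bool"
  assumes "simple_graph V E"
    and "threshold_order V E n v a"
    and "graph_connected V E"
    and "n \<ge> 4"
    and "n - 1 < graph_size E" and "graph_size E < n choose 2"
  shows "LW V E n v a 0 = 1 \<and>
    (\<forall>k\<ge>1. LW V E n v a k =
       num_type1 n a * LW V E n v a (k - 1) +
       (\<Sum>r<k - 2. LW V E n v a r *
          (\<Sum>q\<le>k - 3 - r. ((k - 3 - r - q) choose q) * Fnum n a (q + 1))))"
proof -
  have finV: "finite V" and sym: "\<And>x y. E x y \<Longrightarrow> E y x" and irr: "\<And>x. \<not> E x x"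
    using assms(1) unfolding simple_graph_def by blast+
  have bij: "bij_betw v {1..n} V" and thr: "\<And>i j. i \<in> {2..n} \<Longrightarrow> j \<in> {1..<i} \<Longrightarrow> E (v i) (v j) = a i"
    using assms(2) unfolding threshold_order_def by blast+
  have inj: "inj_on v {1..n}" and Vim: "V = v ` {1..n}" using bij by (auto simp: bij_betw_def)
  have vin: "\<And>j. j \<in> {1..n} \<Longrightarrow> v j \<in> V" using Vim by auto
  have adj: "(v i = v j \<or> E (v i) (v j)) = (i = j \<or> a (max i j))" if ij: "i \<in> {1..n}" "j \<in> {1..n}" for i j
  proof (cases "i = j")
    case True then show ?thesis by simp
  next
    case False
    then have ne: "v i \<noteq> v j" using inj ij by (meson inj_on_contraD)
    show ?thesis
    proof (cases "i < j")
      case True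
      then have "E (v j) (v i) = a j" using thr[of j i] ij by auto
      then show ?thesis using True ne sym by (auto simp: max_def)
    next
      case f2: False
      then have "E (v i) (v j) = a i" using thr[of i j] ij False by auto
      then show ?thesis using f2 ne by (auto simp: max_def)
    qed
  qed
  have ty: "type1 n v a (v j) = a j" if "j \<in> {1..n}" for j
    using that inj unfolding type1_def by (metis inj_on_eq_iff)
  define T where "T = type1 n v a"
  define cnt where "cnt k j = card (wk V E T k (v j))" for k j
  have h1: "\<And>j. j \<in> {1..n} \<Longrightarrow> cnt 1 j = (if a j then 1 else 0)"
    using vin ty by (simp add: cnt_def wk1 T_def)
  have h2: "cnt (Suc (Suc m)) j = (\<Sum>i\<in>{i\<in>{1..n}. i = j \<or> a (max i j)}. cnt (Suc m) i)"
    if j: "j \<in> {1..n}" for m j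
  proof -
    have "{x\<in>V. x = v j \<or> E x (v j)} = v ` {i\<in>{1..n}. i = j \<or> a (max i j)}"
    proof (rule set_eqI, rule iffI)
      fix x assume "x \<in> {x\<in>V. x = v j \<or> E x (v j)}"
      then obtain i where i: "i \<in> {1..n}" "x = v i" "v i = v j \<or> E (v i) (v j)" using Vim by auto
      then show "x \<in> v ` {i\<in>{1..n}. i = j \<or> a (max i j)}" using adj[OF i(1) j] by auto
    next
      fix x assume "x \<in> v ` {i\<in>{1..n}. i = j \<or> a (max i j)}"
      then obtain i where i: "i \<in> {1..n}" "x = v i" "i = j \<or> a (max i j)" by auto
      then show "x \<in> {x\<in>V. x = v j \<or> E x (v j)}" using adj[OF i(1) j] vin[OF i(1)] by auto
    qed
    moreover have "inj_on v {i\<in>{1..n}. i = j \<or> a (max i j)}" using inj by (rule inj_on_subset) auto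
    ultimately show ?thesis
      unfolding cnt_def using card_wkSS[OF finV vin[OF j], where E=E and T=T and m=m] by (simp add: sum.reindex)
  qed
  have LWeq: "LW V E n v a k = Lc n a cnt k" for k
  proof (cases "k = 0")
    case True then show ?thesis by (simp add: LW_def Lc_def)
  next
    case False
    have "{y\<in>V. T y} = v ` T1 n a" using Vim ty by (auto simp: T_def T1_def)
    moreover have "inj_on v (T1 n a)" using inj by (rule inj_on_subset) (auto simp: T1_def)
    ultimately show ?thesis using False card_lw[OF finV, where k=k and E=E and T=T]
      by (simp add: LW_def Lc_def cnt_def T_def[symmetric] sum.reindex)
  qed
  have main: "\<And>K. Lc n a cnt (Suc K) = card (T1 n a) * Lc n a cnt K +
     (\<Sum>r<K - 1. Lc n a cnt r * (\<Sum>q\<le>K - 2 - r. ((K - 2 - r - q) choose q) * (\<Sum>p\<in>P0 n a. bf n a p * HH n a q p)))"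
    by (rule Lc_final[where n=n and a=a and cnt=cnt, OF h1 h2])
  show ?thesis
  proof (intro conjI allI impI)
    show "LW V E n v a 0 = 1" by (simp add: LW_def)
  next
    fix k :: nat assume "k \<ge> 1"
    then obtain K where k: "k = Suc K" by (cases k) auto
    show "LW V E n v a k =
       num_type1 n a * LW V E n v a (k - 1) +
       (\<Sum>r<k - 2. LW V E n v a r *
          (\<Sum>q\<le>k - 3 - r. ((k - 3 - r - q) choose q) * Fnum n a (q + 1)))"
      using main[of K] unfolding k LWeq
      by (simp add: Fnum_eq num_type1_def T1_def)
  qed
qed

end
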